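(* Let $\mathcal{M}=(M_i\colon i\in K)$ be a family of matroids on a common ground set $E$, let $e\in E$, and suppose that $\mathcal{M}\restriction(E\setminus\{e\})$ admits a covering. Then $\mathcal{M}$ admits a covering if and only if there is no $\mathcal{M}$-tight set $X\subseteq E\setminus\{e\}$ with $e\in\mathrm{span}_{M_i}(X)$ for every $i\in K$.
   Context: Matroids here are possibly infinite (given by independence axioms: $\emptyset$ independent, subsets of independent sets independent, the augmentation axiom relative to maximal independent sets, and that every independent subset of any $X\subseteq E$ extends to a maximal independent subset of $X$). Circuits are minimal dependent sets; $X$ spans $e$ in $M$ if $e\in X$ or some circuit $C\ni e$ has $C\setminus\{e\}\subseteq X$; $\mathrm{span}_M(X)$ is the set of elements spanned by $X$; $S\subseteq Y$ is spanning in a matroid on $Y$ if it spans all of $Y$. For $X\subseteq E$, $M\restriction X=(X,\mathcal{I}\cap\mathcal{P}(X))$ and $\mathcal{M}\restriction X=(M_i\restriction X\colon i\in K)$. A covering of a family $(N_i\colon i\in K)$ of matroids on a set $Y$ is a family $(R_i\colon i\in K)$ with $R_i$ independent in $N_i$ and $\bigcup_i R_i=Y$. A family is tight if it admits a covering and in every covering each $R_i$ is spanning in $N_i$. A set $X\subseteq E$ is $\mathcal{M}$-tight if $\mathcal{M}\restriction X$ is tight. *)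

theory Defs
  imports Main
begin

text \<open>A (possibly infinite) matroid on ground set E is represented by its set of
independent sets I, satisfying the independence axioms.\<close>

definition max_indep :: "'a set set \<Rightarrow> 'a set \<Rightarrow> bool" where
  "max_indep I B \<longleftrightarrow> B \<in> I \<and> (\<forall>C\<in>I. B \<subseteq> C \<longrightarrow> C = B)"

definition matroid :: "'a set \<Rightarrow> 'a set set \<Rightarrow> bool" where
  "matroid E I \<longleftrightarrow>
     I \<subseteq> Pow E \<and>
     {} \<in> I \<and>
     (\<forall>A\<in>I. \<forall>B. B \<subseteq> A \<longrightarrow> B \<in> I) \<and>
     (\<forall>A B. A \<in> I \<and> \<not> max_indep I A \<and> max_indep I B \<longrightarrow>
            (\<exists>x\<in>B - A. insert x A \<in> I)) \<and>
     (\<forall>X A. X \<subseteq> E \<and> A \<in> I \<and> A \<subseteq> X \<longrightarrow>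
            (\<exists>B. max_indep (I \<inter> Pow X) B \<and> A \<subseteq> B))"

definition circuit :: "'a set \<Rightarrow> 'a set set \<Rightarrow> 'a set \<Rightarrow> bool" where
  "circuit E I C \<longleftrightarrow> C \<subseteq> E \<and> C \<notin> I \<and> (\<forall>D. D \<subset> C \<longrightarrow> D \<in> I)"

definition spans :: "'a set \<Rightarrow> 'a set set \<Rightarrow> 'a set \<Rightarrow> 'a \<Rightarrow> bool" where
  "spans E I X e \<longleftrightarrow> e \<in> X \<or> (\<exists>C. circuit E I C \<and> e \<in> C \<and> C - {e} \<subseteq> X)"

definition span :: "'a set \<Rightarrow> 'a set set \<Rightarrow> 'a set \<Rightarrow> 'a set" where
  "span E I X = {e. spans E I X e}"

definition spanning :: "'a set \<Rightarrow> 'a set set \<Rightarrow> 'a set \<Rightarrow> bool" where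
  "spanning Y I S \<longleftrightarrow> (\<forall>y\<in>Y. spans Y I S y)"

definition restr :: "'a set \<Rightarrow> 'a set set \<Rightarrow> 'a set set" where
  "restr X I = I \<inter> Pow X"

definition covering :: "'k set \<Rightarrow> 'a set \<Rightarrow> ('k \<Rightarrow> 'a set set) \<Rightarrow> ('k \<Rightarrow> 'a set) \<Rightarrow> bool" where
  "covering K Y N R \<longleftrightarrow> (\<forall>i\<in>K. R i \<in> N i) \<and> (\<Union>i\<in>K. R i) = Y"

definition has_covering :: "'k set \<Rightarrow> 'a set \<Rightarrow> ('k \<Rightarrow> 'a set set) \<Rightarrow> bool" where
  "has_covering K Y N \<longleftrightarrow> (\<exists>R. covering K Y N R)"

definition tight :: "'k set \<Rightarrow> 'a set \<Rightarrow> ('k \<Rightarrow> 'a set set) \<Rightarrow> bool" where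
  "tight K Y N \<longleftrightarrow> has_covering K Y N \<and>
     (\<forall>R. covering K Y N R \<longrightarrow> (\<forall>i\<in>K. spanning Y (N i) (R i)))"

definition family_tight :: "'k set \<Rightarrow> ('k \<Rightarrow> 'a set set) \<Rightarrow> 'a set \<Rightarrow> bool" where
  "family_tight K M X \<longleftrightarrow> tight K X (\<lambda>i. restr X (M i))"

end

theory Submission
  imports Defs
begin

lemma mD1: "matroid E I \<Longrightarrow> I \<subseteq> Pow E"
  unfolding matroid_def by (elim conjE)
lemma mD3: "matroid E I \<Longrightarrow> \<forall>A\<in>I. \<forall>B. B \<subseteq> A \<longrightarrow> B \<in> I"
  unfolding matroid_def by (elim conjE)
lemma mD4: "matroid E I \<Longrightarrow> \<forall>A B. A \<in> I \<and> \<not> max_indep I A \<and> max_indep I B \<longrightarrow> (\<exists>x\<in>B - A. insert x A \<in> I)"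
  unfolding matroid_def by (elim conjE)
lemma mD5: "matroid E I \<Longrightarrow> \<forall>X A. X \<subseteq> E \<and> A \<in> I \<and> A \<subseteq> X \<longrightarrow> (\<exists>B. max_indep (I \<inter> Pow X) B \<and> A \<subseteq> B)"
  unfolding matroid_def by (elim conjE)

lemma m_sub: "matroid E I \<Longrightarrow> A \<in> I \<Longrightarrow> A \<subseteq> E"
  using mD1 by blast
lemma m_down: "matroid E I \<Longrightarrow> A \<in> I \<Longrightarrow> B \<subseteq> A \<Longrightarrow> B \<in> I"
  by (drule mD3) blast
lemma m_aug: "matroid E I \<Longrightarrow> A \<in> I \<Longrightarrow> \<not> max_indep I A \<Longrightarrow> max_indep I B \<Longrightarrow> \<exists>x\<in>B - A. insert x A \<in> I"
  by (drule mD4) blast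
lemma m_ext: "matroid E I \<Longrightarrow> X \<subseteq> E \<Longrightarrow> A \<in> I \<Longrightarrow> A \<subseteq> X \<Longrightarrow>
   \<exists>B. B \<in> I \<and> B \<subseteq> X \<and> A \<subseteq> B \<and> (\<forall>C\<in>I. C \<subseteq> X \<longrightarrow> B \<subseteq> C \<longrightarrow> C = B)"
proof -
  assume m: "matroid E I" and a: "X \<subseteq> E" "A \<in> I" "A \<subseteq> X"
  have "\<exists>B. max_indep (I \<inter> Pow X) B \<and> A \<subseteq> B" using mD5[OF m, rule_format, of X A] a by simp
  then obtain B where B: "max_indep (I \<inter> Pow X) B" "A \<subseteq> B" by blast
  have "B \<in> I" "B \<subseteq> X" "\<forall>C\<in>I. C \<subseteq> X \<longrightarrow> B \<subseteq> C \<longrightarrow> C = B"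
    using B(1) unfolding max_indep_def by auto
  then show ?thesis using B(2) by blast
qed
lemma m_base: "matroid E I \<Longrightarrow> A \<in> I \<Longrightarrow> \<exists>B. max_indep I B \<and> A \<subseteq> B"
proof -
  assume m: "matroid E I" and A: "A \<in> I"
  have "A \<subseteq> E" using m_sub[OF m A] .
  from m_ext[OF m order_refl A this] obtain B where "B \<in> I" "B \<subseteq> E" "A \<subseteq> B"
    "\<forall>C\<in>I. C \<subseteq> E \<longrightarrow> B \<subseteq> C \<longrightarrow> C = B" by blast
  then show ?thesis using m_sub[OF m] unfolding max_indep_def by blast
qed

lemma circ_dep: "circuit E I C \<Longrightarrow> C \<notin> I"
  unfolding circuit_def by blast
lemma circ_E: "circuit E I C \<Longrightarrow> C \<subseteq> E"
  unfolding circuit_def by blast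
lemma circ_sub: "circuit E I C \<Longrightarrow> D \<subset> C \<Longrightarrow> D \<in> I"
  unfolding circuit_def by blast

lemma fc:
  assumes m: "matroid E I" and J: "J \<in> I" and x: "x \<in> E" "x \<notin> J" and dep: "insert x J \<notin> I"
  obtains C where "circuit E I C" "x \<in> C" "C \<subseteq> insert x J"
    "\<And>y. y \<in> J \<Longrightarrow> y \<in> C \<longleftrightarrow> insert x (J - {y}) \<in> I"
    "\<And>C'. circuit E I C' \<Longrightarrow> C' \<subseteq> insert x J \<Longrightarrow> C' = C"
proof -
  obtain B where B: "max_indep I B" "J \<subseteq> B" using m_base[OF m J] by blast
  have BI: "B \<in> I" using B unfolding max_indep_def by blast
  have BE: "B \<subseteq> E" using m_sub[OF m BI] .
  have xB: "x \<notin> B"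
  proof
    assume "x \<in> B" then have "insert x J \<subseteq> B" using B by blast
    then show False using m_down[OF m BI] dep by blast
  qed
  define C where "C = insert x {y \<in> B. insert x (B - {y}) \<in> I}"
  have CJ: "C \<subseteq> insert x J"
  proof
    fix y assume "y \<in> C"
    show "y \<in> insert x J"
    proof (rule ccontr)
      assume ny: "y \<notin> insert x J"
      then have "y \<in> B" "insert x (B - {y}) \<in> I" using \<open>y \<in> C\<close> unfolding C_def by auto
      moreover have "insert x J \<subseteq> insert x (B - {y})" using ny B by blast
      ultimately show False using m_down[OF m] dep by blast
    qed
  qed
  have CnI: "C \<notin> I"
  proof
    assume CI: "C \<in> I"
    have "insert x B \<subseteq> E" using BE x by blast
    moreover have "C \<subseteq> insert x B" unfolding C_def by blast
    ultimately obtain B0 where B0: "B0 \<in> I" "B0 \<subseteq> insert x B" "C \<subseteq> B0"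
      "\<forall>D\<in>I. D \<subseteq> insert x B \<longrightarrow> B0 \<subseteq> D \<longrightarrow> D = B0"
      using m_ext[OF m _ CI] by metis
    have xB0: "x \<in> B0" using B0 unfolding C_def by blast
    obtain y where y: "y \<in> B" "y \<notin> B0"
    proof (rule ccontr)
      assume "\<not> thesis"
      then have "B \<subseteq> B0" using that by blast
      then have "B0 = B" using B(1) B0(1) unfolding max_indep_def by blast
      then show False using xB0 xB by blast
    qed
    have B0max: "max_indep I B0"
    proof (rule ccontr)
      assume "\<not> max_indep I B0"
      then obtain z where z: "z \<in> B - B0" "insert z B0 \<in> I" using m_aug[OF m B0(1) _ B(1)] by blast
      have "insert z B0 \<subseteq> insert x B" using z B0(2) by blast
      then have "insert z B0 = B0" using B0(4) z by blast
      then show False using z by blast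
    qed
    have "B - {y} \<in> I" using m_down[OF m BI] by blast
    moreover have "\<not> max_indep I (B - {y})"
      using BI y unfolding max_indep_def by blast
    ultimately obtain w where w: "w \<in> B0 - (B - {y})" "insert w (B - {y}) \<in> I"
      using m_aug[OF m _ _ B0max] by blast
    have "w = x" using w B0(2) y by blast
    then have "y \<in> C" using w y unfolding C_def by blast
    then show False using B0(3) y by blast
  qed
  have CE: "C \<subseteq> E" using BE x unfolding C_def by blast
  have Cmin: "\<forall>D. D \<subset> C \<longrightarrow> D \<in> I"
  proof (intro allI impI)
    fix D assume D: "D \<subset> C"
    show "D \<in> I"
    proof (cases "x \<in> D")
      case False
      then have "D \<subseteq> B" using D unfolding C_def by blast
      then show ?thesis using m_down[OF m BI] by blast
    next
      case True
      then obtain y where y: "y \<in> C" "y \<notin> D" "y \<noteq> x" using D by blast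
      then have "y \<in> B" "insert x (B - {y}) \<in> I" unfolding C_def by auto
      moreover have "D \<subseteq> insert x (B - {y})" using D y unfolding C_def by blast
      ultimately show ?thesis using m_down[OF m] by blast
    qed
  qed
  have circ: "circuit E I C" unfolding circuit_def using CE CnI Cmin by blast
  have uniq: "C' = C" if C': "circuit E I C'" "C' \<subseteq> insert x J" for C'
  proof -
    have xC': "x \<in> C'"
    proof (rule ccontr)
      assume "x \<notin> C'"
      then have "C' \<subseteq> J" using C' by blast
      then show False using circ_dep[OF C'(1)] m_down[OF m J] by blast
    qed
    have "C \<subseteq> C'"
    proof
      fix y assume yC: "y \<in> C"
      show "y \<in> C'"
      proof (rule ccontr)
        assume nyC: "y \<notin> C'"
        then have yx: "y \<noteq> x" using xC' by blast
        then have "y \<in> B" "insert x (B - {y}) \<in> I" using yC unfolding C_def by auto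
        moreover have "C' \<subseteq> insert x (B - {y})" using C' nyC B by blast
        ultimately show False using circ_dep[OF C'(1)] m_down[OF m] by blast
      qed
    qed
    then show ?thesis using circ_sub[OF C'(1)] CnI by blast
  qed
  have iff: "y \<in> C \<longleftrightarrow> insert x (J - {y}) \<in> I" if yJ: "y \<in> J" for y
  proof
    assume "y \<in> C"
    then have "insert x (B - {y}) \<in> I" using yJ x unfolding C_def by auto
    moreover have "insert x (J - {y}) \<subseteq> insert x (B - {y})" using B by blast
    ultimately show "insert x (J - {y}) \<in> I" using m_down[OF m] by blast
  next
    assume ins: "insert x (J - {y}) \<in> I"
    show "y \<in> C"
    proof (rule ccontr)
      assume "y \<notin> C"
      then have "C \<subseteq> insert x (J - {y})" using CJ by blast
      then show False using ins m_down[OF m] CnI by blast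
    qed
  qed
  have xC: "x \<in> C" unfolding C_def by simp
  show ?thesis by (rule that[OF circ xC CJ iff uniq])
qed

lemma spans_dep:
  assumes "spans E I J x" "matroid E I"
  shows "x \<in> J \<or> insert x J \<notin> I"
proof (cases "x \<in> J")
  case False
  then obtain C where C: "circuit E I C" "x \<in> C" "C - {x} \<subseteq> J" using assms(1) unfolding spans_def by blast
  then have "C \<subseteq> insert x J" by blast
  then show ?thesis using circ_dep[OF C(1)] m_down[OF assms(2)] by blast
qed simp

lemma dep_spans:
  assumes "matroid E I" "J \<in> I" "x \<in> E" "x \<notin> J" "insert x J \<notin> I"
  shows "spans E I J x"
proof -
  obtain C where "circuit E I C" "x \<in> C" "C \<subseteq> insert x J" by (rule fc[OF assms])
  then have "C - {x} \<subseteq> J" by blast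
  then show ?thesis unfolding spans_def using \<open>circuit E I C\<close> \<open>x \<in> C\<close> by blast
qed

lemma glue:
  assumes m: "matroid E I" and R: "R \<in> I" and W: "W \<subseteq> E"
    and cl: "\<forall>w\<in>W. w \<in> R \<or> insert w (R \<inter> W) \<notin> I"
    and S: "S \<subseteq> W" "S \<in> I"
  shows "S \<union> (R - W) \<in> I"
proof -
  obtain S' where S': "S' \<in> I" "S' \<subseteq> W" "S \<subseteq> S'" "\<forall>C\<in>I. C \<subseteq> W \<longrightarrow> S' \<subseteq> C \<longrightarrow> C = S'"
    using m_ext[OF m W S(2) S(1)] by blast
  obtain B where B: "max_indep I B" "R \<subseteq> B" using m_base[OF m R] by blast
  have BI: "B \<in> I" using B unfolding max_indep_def by blast
  have BW: "B \<inter> W = R \<inter> W"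
  proof
    show "B \<inter> W \<subseteq> R \<inter> W"
    proof
      fix w assume w: "w \<in> B \<inter> W"
      show "w \<in> R \<inter> W"
      proof (rule ccontr)
        assume "w \<notin> R \<inter> W"
        then have "w \<notin> R" using w by blast
        then have "insert w (R \<inter> W) \<notin> I" using cl w by blast
        moreover have "insert w (R \<inter> W) \<subseteq> B" using w B by blast
        ultimately show False using m_down[OF m BI] by blast
      qed
    qed
  qed (use B in blast)
  define D where "D = B - W"
  have "S' \<union> D \<subseteq> E" using S' W m_sub[OF m BI] unfolding D_def by blast
  then obtain A where A: "A \<in> I" "A \<subseteq> S' \<union> D" "S' \<subseteq> A" "\<forall>C\<in>I. C \<subseteq> S' \<union> D \<longrightarrow> A \<subseteq> C \<longrightarrow> C = A"
    using m_ext[OF m _ S'(1)] by blast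
  have Amax: "max_indep I A"
  proof (rule ccontr)
    assume "\<not> max_indep I A"
    then obtain z where z: "z \<in> B - A" "insert z A \<in> I" using m_aug[OF m A(1) _ B(1)] by blast
    show False
    proof (cases "z \<in> W")
      case False
      then have "insert z A \<subseteq> S' \<union> D" using z A(2) unfolding D_def by blast
      then show False using A(4) z by blast
    next
      case True
      then have "insert z S' \<in> I" using m_down[OF m z(2)] A(3) by blast
      moreover have "insert z S' \<subseteq> W" using True S' by blast
      ultimately have "insert z S' = S'" using S'(4) by blast
      then show False using z A(3) by blast
    qed
  qed
  have DA: "D \<subseteq> A"
  proof
    fix b assume bD: "b \<in> D"
    show "b \<in> A"
    proof (rule ccontr)
      assume bA: "b \<notin> A"
      have "B - {b} \<in> I" using m_down[OF m BI] by blast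
      moreover have "\<not> max_indep I (B - {b})" using BI bD unfolding max_indep_def D_def by blast
      ultimately obtain w where w: "w \<in> A - (B - {b})" "insert w (B - {b}) \<in> I"
        using m_aug[OF m _ _ Amax] by blast
      have wB: "w \<notin> B" using w bA by blast
      have wW: "w \<in> S'" using w wB A(2) unfolding D_def by blast
      then have "w \<in> W" using S' by blast
      moreover have "w \<notin> R" using wB B by blast
      ultimately have "insert w (R \<inter> W) \<notin> I" using cl by blast
      moreover have "insert w (R \<inter> W) \<subseteq> insert w (B - {b})" using B bD unfolding D_def by blast
      ultimately show False using w m_down[OF m] by blast
    qed
  qed
  have "R - W \<subseteq> D" using B(2) unfolding D_def by blast
  then have "S \<union> (R - W) \<subseteq> A" using S'(3) A(3) DA by blast
  then show ?thesis using m_down[OF m A(1)] by blast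
qed

lemma fc_same:
  assumes m: "matroid E I" and J: "J \<in> I" and J': "J' \<in> I"
    and x: "x \<in> E" "x \<notin> J" "x \<notin> J'" and dep: "insert x J \<notin> I"
    and C0: "\<And>C. circuit E I C \<Longrightarrow> C \<subseteq> insert x J \<Longrightarrow> C \<subseteq> insert x J'"
  shows "insert x J' \<notin> I \<and> (\<forall>y\<in>J \<inter> J'. insert x (J' - {y}) \<in> I \<longleftrightarrow> insert x (J - {y}) \<in> I)"
proof -
  obtain C where C: "circuit E I C" "x \<in> C" "C \<subseteq> insert x J"
    "\<And>y. y \<in> J \<Longrightarrow> y \<in> C \<longleftrightarrow> insert x (J - {y}) \<in> I"
    by (rule fc[OF m J x(1,2) dep]) blast
  have CJ': "C \<subseteq> insert x J'" using C0[OF C(1) C(3)] .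
  have dep': "insert x J' \<notin> I"
  proof
    assume "insert x J' \<in> I"
    then have "C \<in> I" using m_down[OF m] CJ' by blast
    then show False using circ_dep[OF C(1)] by blast
  qed
  obtain C' where C': "circuit E I C'" "x \<in> C'" "C' \<subseteq> insert x J'"
    "\<And>y. y \<in> J' \<Longrightarrow> y \<in> C' \<longleftrightarrow> insert x (J' - {y}) \<in> I"
    "\<And>C''. circuit E I C'' \<Longrightarrow> C'' \<subseteq> insert x J' \<Longrightarrow> C'' = C'"
    by (rule fc[OF m J' x(1,3) dep']) blast
  have "C = C'" using C'(5)[OF C(1) CJ'] .
  then show ?thesis using dep' C(4) C'(4) by blast
qed

lemma transfer:
  assumes m: "matroid E I" and J: "J \<in> I" and x: "x \<in> E" "x \<notin> J" and dep: "insert x J \<notin> I"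
    and ym: "ym \<in> J" "insert x (J - {ym}) \<notin> I" and xm: "xm \<notin> J" "xm \<noteq> x"
    and J': "insert xm (J - {ym}) \<in> I"
  shows "insert x (insert xm (J - {ym})) \<notin> I \<and>
    (\<forall>y\<in>J - {ym}. insert x (insert xm (J - {ym}) - {y}) \<in> I \<longleftrightarrow> insert x (J - {y}) \<in> I)"
proof -
  have C0: "C \<subseteq> insert x (insert xm (J - {ym}))" if C: "circuit E I C" "C \<subseteq> insert x J" for C
  proof -
    obtain C1 where C1: "circuit E I C1" "x \<in> C1" "C1 \<subseteq> insert x J"
      "\<And>y. y \<in> J \<Longrightarrow> y \<in> C1 \<longleftrightarrow> insert x (J - {y}) \<in> I"
      "\<And>C'. circuit E I C' \<Longrightarrow> C' \<subseteq> insert x J \<Longrightarrow> C' = C1"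
      by (rule fc[OF m J x dep]) blast
    have "C = C1" using C1(5)[OF C] .
    moreover have "ym \<notin> C1" using C1(4)[OF ym(1)] ym(2) by blast
    ultimately show ?thesis using C(2) by blast
  qed
  have "x \<notin> insert xm (J - {ym})" using x xm by blast
  from fc_same[OF m J J' x(1,2) this dep C0]
  have "insert x (insert xm (J - {ym})) \<notin> I \<and>
    (\<forall>y\<in>J \<inter> insert xm (J - {ym}). insert x (insert xm (J - {ym}) - {y}) \<in> I \<longleftrightarrow> insert x (J - {y}) \<in> I)" .
  then show ?thesis by blast
qed

lemma addfree:
  assumes m: "matroid E I" and J: "J \<in> I" and x: "x \<in> E" "x \<notin> J" "x \<noteq> w" and dep: "insert x J \<notin> I"
    and w: "w \<notin> J" "insert w J \<in> I"
  shows "insert x (insert w J) \<notin> I \<and>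
    (\<forall>y\<in>J. insert x (insert w J - {y}) \<in> I \<longleftrightarrow> insert x (J - {y}) \<in> I)"
proof -
  have "x \<notin> insert w J" using x by blast
  from fc_same[OF m J w(2) x(1,2) this dep]
  have "insert x (insert w J) \<notin> I \<and>
    (\<forall>y\<in>J \<inter> insert w J. insert x (insert w J - {y}) \<in> I \<longleftrightarrow> insert x (J - {y}) \<in> I)" by blast
  then show ?thesis by blast
qed

lemma multi_exch:
  assumes m: "matroid E I"
  shows "J \<in> I \<Longrightarrow> distinct (map fst ps) \<Longrightarrow> distinct (map snd ps) \<Longrightarrow>
    (\<forall>p\<in>set ps. fst p \<in> E \<and> fst p \<notin> J \<and> snd p \<in> J \<and> insert (fst p) J \<notin> I \<and> insert (fst p) (J - {snd p}) \<in> I) \<Longrightarrow>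
    sorted_wrt (\<lambda>q p. insert (fst q) (J - {snd p}) \<notin> I) ps \<Longrightarrow>
    (J - snd ` set ps) \<union> fst ` set ps \<in> I"
proof (induction ps arbitrary: J rule: rev_induct)
  case Nil
  then show ?case by simp
next
  case (snoc pm ps)
  obtain xm ym where pm: "pm = (xm, ym)" by (cases pm)
  define J' where "J' = insert xm (J - {ym})"
  have hm: "xm \<in> E" "xm \<notin> J" "ym \<in> J" "insert xm J \<notin> I" "J' \<in> I"
    using snoc.prems(4) unfolding pm J'_def by auto
  have dfst: "distinct (map fst ps)" "xm \<notin> fst ` set ps" using snoc.prems(2) pm by auto
  have dsnd: "distinct (map snd ps)" "ym \<notin> snd ` set ps" using snoc.prems(3) pm by auto
  have sw: "sorted_wrt (\<lambda>q p. insert (fst q) (J - {snd p}) \<notin> I) ps"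
    and swl: "\<forall>q\<in>set ps. insert (fst q) (J - {ym}) \<notin> I"
    using snoc.prems(5) pm by (auto simp: sorted_wrt_append)
  have hp: "fst p \<in> E \<and> fst p \<notin> J \<and> snd p \<in> J \<and> insert (fst p) J \<notin> I \<and> insert (fst p) (J - {snd p}) \<in> I"
    if "p \<in> set ps" for p using snoc.prems(4) that by auto
  have tr: "insert (fst p) J' \<notin> I \<and>
    (\<forall>y\<in>J - {ym}. insert (fst p) (J' - {y}) \<in> I \<longleftrightarrow> insert (fst p) (J - {y}) \<in> I)"
    if p: "p \<in> set ps" for p
  proof -
    have "fst p \<noteq> xm" using dfst p by force
    then show ?thesis unfolding J'_def
      using transfer[OF m snoc.prems(1) _ _ _ hm(3) _ hm(2)] hp[OF p] swl p hm(5)[unfolded J'_def]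
      by blast
  qed
  have IH: "(J' - snd ` set ps) \<union> fst ` set ps \<in> I"
  proof (rule snoc.IH[OF hm(5) dfst(1) dsnd(1)])
    show "\<forall>p\<in>set ps. fst p \<in> E \<and> fst p \<notin> J' \<and> snd p \<in> J' \<and> insert (fst p) J' \<notin> I \<and> insert (fst p) (J' - {snd p}) \<in> I"
    proof
      fix p assume p: "p \<in> set ps"
      have "fst p \<noteq> xm" using dfst p by force
      moreover have "snd p \<noteq> ym" using dsnd p by force
      ultimately show "fst p \<in> E \<and> fst p \<notin> J' \<and> snd p \<in> J' \<and> insert (fst p) J' \<notin> I \<and> insert (fst p) (J' - {snd p}) \<in> I"
        using hp[OF p] tr[OF p] unfolding J'_def by auto
    qed
    show "sorted_wrt (\<lambda>q p. insert (fst q) (J' - {snd p}) \<notin> I) ps"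
      using sw
    proof (rule sorted_wrt_mono_rel[rotated])
      fix q p assume qp: "q \<in> set ps" "p \<in> set ps" "insert (fst q) (J - {snd p}) \<notin> I"
      have "snd p \<in> J - {ym}" using hp[OF qp(2)] dsnd qp(2) by force
      then show "insert (fst q) (J' - {snd p}) \<notin> I" using tr[OF qp(1)] qp(3) by blast
    qed
  qed
  have "(J' - snd ` set ps) \<union> fst ` set ps = (J - snd ` set (ps @ [pm])) \<union> fst ` set (ps @ [pm])"
    unfolding J'_def pm using hm(2) hp by auto
  then show ?case using IH by simp
qed

definition arc :: "('k \<Rightarrow> 'a set set) \<Rightarrow> ('k \<Rightarrow> 'a set) \<Rightarrow> 'k \<Rightarrow> 'a \<Rightarrow> 'a \<Rightarrow> bool" where
  "arc M T j x y \<longleftrightarrow> x \<notin> T j \<and> insert x (T j) \<notin> M j \<and> y \<in> T j \<and> insert x (T j - {y}) \<in> M j"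

inductive apath :: "'k set \<Rightarrow> ('k \<Rightarrow> 'a set set) \<Rightarrow> ('k \<Rightarrow> 'a set) \<Rightarrow> 'a \<Rightarrow> ('a \<times> 'k \<times> 'a) list \<Rightarrow> 'a \<Rightarrow> bool"
  for K M T where
  anil: "apath K M T u [] u"
| acons: "j \<in> K \<Longrightarrow> arc M T j u v \<Longrightarrow> apath K M T v ss w \<Longrightarrow> apath K M T u ((u,j,v)#ss) w"

definition vtx :: "('a \<times> 'k \<times> 'a) list \<Rightarrow> 'a \<Rightarrow> nat \<Rightarrow> 'a" where
  "vtx ss w k = (if k < length ss then fst (ss!k) else w)"

lemma vtx_Cons_Suc[simp]: "vtx (s#ss) w (Suc k) = vtx ss w k"
  unfolding vtx_def by simp
lemma vtx_len[simp]: "vtx ss w (length ss) = w"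
  unfolding vtx_def by simp

lemma apath_vtx0: "apath K M T u ss w \<Longrightarrow> vtx ss w 0 = u"
  by (induction rule: apath.induct) (auto simp: vtx_def)

lemma apath_step: "apath K M T u ss w \<Longrightarrow> k < length ss \<Longrightarrow>
   ss!k = (vtx ss w k, fst (snd (ss!k)), vtx ss w (Suc k)) \<and> fst (snd (ss!k)) \<in> K \<and>
   arc M T (fst (snd (ss!k))) (vtx ss w k) (vtx ss w (Suc k))"
proof (induction arbitrary: k rule: apath.induct)
  case (anil u)
  then show ?case by simp
next
  case (acons j u v ss w)
  show ?case
  proof (cases k)
    case 0
    have "vtx ((u, j, v) # ss) w (Suc 0) = v" using apath_vtx0[OF acons.hyps(3)] by simp
    then show ?thesis using 0 acons.hyps by (simp add: vtx_def)
  next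
    case (Suc k')
    then show ?thesis using acons.IH[of k'] acons.prems by simp
  qed
qed

lemma apath_app: "apath K M T u ss1 m \<Longrightarrow> apath K M T m ss2 w \<Longrightarrow> apath K M T u (ss1 @ ss2) w"
  by (induction rule: apath.induct) (auto intro: apath.intros)

lemma apath_take_drop: "apath K M T u ss w \<Longrightarrow> k \<le> length ss \<Longrightarrow>
   apath K M T u (take k ss) (vtx ss w k) \<and> apath K M T (vtx ss w k) (drop k ss) w"
proof (induction arbitrary: k rule: apath.induct)
  case (anil u)
  then show ?case by (simp add: vtx_def apath.intros)
next
  case (acons j u v ss w)
  show ?case
  proof (cases k)
    case 0
    then show ?thesis using acons.hyps by (simp add: vtx_def apath.intros)
  next
    case (Suc k')
    then show ?thesis using acons.IH[of k'] acons.prems acons.hyps(1,2) by (auto intro: apath.intros)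
  qed
qed

lemma apath_E: "apath K M T u ss w \<Longrightarrow> u \<in> E \<Longrightarrow> (\<forall>j\<in>K. T j \<subseteq> E) \<Longrightarrow> w \<in> E"
  by (induction rule: apath.induct) (auto simp: arc_def)

lemma apath_vtx_E: "apath K M T u ss w \<Longrightarrow> u \<in> E \<Longrightarrow> (\<forall>j\<in>K. T j \<subseteq> E) \<Longrightarrow> k \<le> length ss \<Longrightarrow> vtx ss w k \<in> E"
  using apath_take_drop apath_E by metis

definition ps :: "('a \<times> 'k \<times> 'a) list \<Rightarrow> 'k \<Rightarrow> ('a \<times> 'a) list" where
  "ps ss j = map (\<lambda>s. (fst s, snd (snd s))) (filter (\<lambda>s. fst (snd s) = j) ss)"

locale spath =
  fixes E :: "'a set" and K :: "'k set" and M :: "'k \<Rightarrow> 'a set set" and T :: "'k \<Rightarrow> 'a set"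
    and e :: 'a and ss :: "('a \<times> 'k \<times> 'a) list" and w :: 'a
  assumes mat: "\<forall>j\<in>K. matroid E (M j)" and TM: "\<forall>j\<in>K. T j \<in> M j" and eE: "e \<in> E"
    and P: "apath K M T e ss w" and mn: "\<forall>ss'. apath K M T e ss' w \<longrightarrow> length ss \<le> length ss'"
begin

lemma TE: "\<forall>j\<in>K. T j \<subseteq> E" using mat TM m_sub by blast

lemma D1: assumes k: "k \<le> length ss" and p: "apath K M T e ss' (vtx ss w k)" shows "k \<le> length ss'"
proof -
  have "apath K M T (vtx ss w k) (drop k ss) w" using apath_take_drop[OF P k] by blast
  then have "apath K M T e (ss' @ drop k ss) w" using apath_app[OF p] by blast
  then have "length ss \<le> length (ss' @ drop k ss)" using mn by blast
  then show ?thesis using k by simp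
qed

lemma D2: assumes ab: "a < b" "b \<le> length ss" shows "vtx ss w a \<noteq> vtx ss w b"
proof
  assume eq: "vtx ss w a = vtx ss w b"
  have "apath K M T e (take a ss) (vtx ss w a)" using apath_take_drop[OF P, of a] ab by simp
  then have "apath K M T e (take a ss) (vtx ss w b)" using eq by simp
  from D1[OF ab(2) this] have "b \<le> length (take a ss)" .
  then show False using ab by simp
qed

lemma D3: assumes ik: "i < k" "k < length ss" and jj: "fst (snd (ss!k)) = fst (snd (ss!i))"
  shows "insert (vtx ss w i) (T (fst (snd (ss!i))) - {vtx ss w (Suc k)}) \<notin> M (fst (snd (ss!i)))"
proof
  define j where "j = fst (snd (ss!i))"
  assume ins: "insert (vtx ss w i) (T (fst (snd (ss!i))) - {vtx ss w (Suc k)}) \<in> M (fst (snd (ss!i)))"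
  have si: "j \<in> K" "arc M T j (vtx ss w i) (vtx ss w (Suc i))"
    using apath_step[OF P, of i] ik unfolding j_def by auto
  have sk: "arc M T j (vtx ss w k) (vtx ss w (Suc k))"
    using apath_step[OF P, of k] ik jj unfolding j_def by auto
  have a: "arc M T j (vtx ss w i) (vtx ss w (Suc k))"
    using si(2) sk ins unfolding arc_def j_def by blast
  have "apath K M T e (take i ss) (vtx ss w i)" using apath_take_drop[OF P, of i] ik by simp
  moreover have "apath K M T (vtx ss w i) [(vtx ss w i, j, vtx ss w (Suc k))] (vtx ss w (Suc k))"
    using si(1) a by (auto intro: apath.intros)
  ultimately have "apath K M T e (take i ss @ [(vtx ss w i, j, vtx ss w (Suc k))]) (vtx ss w (Suc k))"
    by (rule apath_app)
  from D1[OF _ this] ik have "Suc k \<le> length (take i ss @ [(vtx ss w i, j, vtx ss w (Suc k))])"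
    by simp
  then show False using ik by simp
qed

lemma D7: assumes s: "s \<in> set ss"
  shows "fst (snd s) \<in> K \<and> arc M T (fst (snd s)) (fst s) (snd (snd s)) \<and> fst s \<in> E \<and> fst s \<noteq> w"
proof -
  obtain k where k: "k < length ss" "s = ss!k" using s by (auto simp: in_set_conv_nth)
  have st: "ss!k = (vtx ss w k, fst (snd (ss!k)), vtx ss w (Suc k)) \<and> fst (snd (ss!k)) \<in> K \<and>
   arc M T (fst (snd (ss!k))) (vtx ss w k) (vtx ss w (Suc k))" using apath_step[OF P k(1)] .
  have "vtx ss w k \<in> E" using apath_vtx_E[OF P eE TE] k by simp
  moreover have "vtx ss w k \<noteq> w" using D2[of k "length ss"] k by simp
  ultimately show ?thesis using st k by (metis fst_conv snd_conv)
qed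

lemma D4: "distinct (map fst ss)" "distinct (map (\<lambda>s. snd (snd s)) ss)"
proof -
  have f: "fst (ss!k) = vtx ss w k" "snd (snd (ss!k)) = vtx ss w (Suc k)" if "k < length ss" for k
    using apath_step[OF P that] by (metis fst_conv snd_conv)+
  show "distinct (map fst ss)"
  proof (subst distinct_conv_nth, intro allI impI)
    fix a b assume ab: "a < length (map fst ss)" "b < length (map fst ss)" "a \<noteq> b"
    then show "map fst ss ! a \<noteq> map fst ss ! b"
      using f D2[of a b] D2[of b a] by (cases "a < b") auto
  qed
  show "distinct (map (\<lambda>s. snd (snd s)) ss)"
  proof (subst distinct_conv_nth, intro allI impI)
    fix a b assume ab: "a < length (map (\<lambda>s. snd (snd s)) ss)" "b < length (map (\<lambda>s. snd (snd s)) ss)" "a \<noteq> b"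
    then show "map (\<lambda>s. snd (snd s)) ss ! a \<noteq> map (\<lambda>s. snd (snd s)) ss ! b"
      using f D2[of "Suc a" "Suc b"] D2[of "Suc b" "Suc a"] by (cases "a < b") auto
  qed
qed

lemma D5: "sorted_wrt (\<lambda>s t. fst (snd s) = fst (snd t) \<longrightarrow>
     insert (fst s) (T (fst (snd s)) - {snd (snd t)}) \<notin> M (fst (snd s))) ss"
proof (subst sorted_wrt_iff_nth_less, intro allI impI)
  fix i k assume ik: "i < k" "k < length ss" "fst (snd (ss!i)) = fst (snd (ss!k))"
  have "fst (ss!i) = vtx ss w i" using apath_step[OF P, of i] ik by (metis fst_conv less_trans)
  moreover have "snd (snd (ss!k)) = vtx ss w (Suc k)" using apath_step[OF P, of k] ik by (metis snd_conv)
  ultimately show "insert (fst (ss!i)) (T (fst (snd (ss!i))) - {snd (snd (ss!k))}) \<notin> M (fst (snd (ss!i)))"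
    using D3[OF ik(1,2)] ik(3) by simp
qed

lemma shift:
  assumes j: "j \<in> K" and J: "J = T j \<or> (J = insert w (T j) \<and> w \<notin> T j \<and> insert w (T j) \<in> M j)"
  shows "(J - snd ` set (ps ss j)) \<union> fst ` set (ps ss j) \<in> M j"
proof -
  have m: "matroid E (M j)" using mat j by blast
  have Tj: "T j \<in> M j" using TM j by blast
  have JM: "J \<in> M j" using J Tj by blast
  have conv: "(x \<notin> J \<and> insert x J \<notin> M j \<and> y \<in> J \<and> (insert x (J - {y}) \<in> M j \<longleftrightarrow> insert x (T j - {y}) \<in> M j))"
    if x: "x \<in> E" "x \<notin> T j" "x \<noteq> w" "insert x (T j) \<notin> M j" and y: "y \<in> T j" for x y
    using J
  proof
    assume "J = T j" then show ?thesis using x y by simp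
  next
    assume J2: "J = insert w (T j) \<and> w \<notin> T j \<and> insert w (T j) \<in> M j"
    have "insert x (insert w (T j)) \<notin> M j \<and>
      (\<forall>y\<in>T j. insert x (insert w (T j) - {y}) \<in> M j \<longleftrightarrow> insert x (T j - {y}) \<in> M j)"
      using addfree[OF m Tj x(1,2,3) x(4)] J2 by blast
    then show ?thesis using J2 x y by blast
  qed
  have psfst: "map fst (ps ss j) = map fst (filter (\<lambda>s. fst (snd s) = j) ss)"
    unfolding ps_def by simp
  have pssnd: "map snd (ps ss j) = map (\<lambda>s. snd (snd s)) (filter (\<lambda>s. fst (snd s) = j) ss)"
    unfolding ps_def by simp
  show ?thesis
  proof (rule multi_exch[OF m JM])
    show "distinct (map fst (ps ss j))" unfolding psfst using D4(1) by (rule distinct_map_filter)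
    show "distinct (map snd (ps ss j))" unfolding pssnd using D4(2) by (rule distinct_map_filter)
    show "\<forall>p\<in>set (ps ss j). fst p \<in> E \<and> fst p \<notin> J \<and> snd p \<in> J \<and> insert (fst p) J \<notin> M j \<and> insert (fst p) (J - {snd p}) \<in> M j"
    proof
      fix p assume "p \<in> set (ps ss j)"
      then obtain s where s: "s \<in> set ss" "fst (snd s) = j" "p = (fst s, snd (snd s))" unfolding ps_def by auto
      have d: "fst (snd s) \<in> K \<and> arc M T (fst (snd s)) (fst s) (snd (snd s)) \<and> fst s \<in> E \<and> fst s \<noteq> w"
        using D7[OF s(1)] .
      then have a: "fst s \<notin> T j" "insert (fst s) (T j) \<notin> M j" "snd (snd s) \<in> T j" "insert (fst s) (T j - {snd (snd s)}) \<in> M j"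
        using s(2) unfolding arc_def by auto
      show "fst p \<in> E \<and> fst p \<notin> J \<and> snd p \<in> J \<and> insert (fst p) J \<notin> M j \<and> insert (fst p) (J - {snd p}) \<in> M j"
        using conv[of "fst s" "snd (snd s)"] a d s(3) by simp
    qed
    show "sorted_wrt (\<lambda>q p. insert (fst q) (J - {snd p}) \<notin> M j) (ps ss j)"
      unfolding ps_def sorted_wrt_map
    proof (rule sorted_wrt_mono_rel[OF _ sorted_wrt_filter[OF D5]])
      fix s t assume st: "s \<in> set (filter (\<lambda>s. fst (snd s) = j) ss)" "t \<in> set (filter (\<lambda>s. fst (snd s) = j) ss)"
        and r: "fst (snd s) = fst (snd t) \<longrightarrow> insert (fst s) (T (fst (snd s)) - {snd (snd t)}) \<notin> M (fst (snd s))"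
      have s1: "s \<in> set ss" "fst (snd s) = j" and t1: "t \<in> set ss" "fst (snd t) = j" using st by auto
      have ds: "arc M T j (fst s) (snd (snd s)) \<and> fst s \<in> E \<and> fst s \<noteq> w" using D7[OF s1(1)] s1(2) by simp
      have dt: "arc M T j (fst t) (snd (snd t))" using D7[OF t1(1)] t1(2) by simp
      have "insert (fst s) (T j - {snd (snd t)}) \<notin> M j" using r s1(2) t1(2) by simp
      moreover have "insert (fst s) (J - {snd (snd t)}) \<in> M j \<longleftrightarrow> insert (fst s) (T j - {snd (snd t)}) \<in> M j"
        using conv[of "fst s" "snd (snd t)"] ds dt unfolding arc_def by blast
      ultimately show "insert (fst (fst s, snd (snd s))) (J - {snd (fst t, snd (snd t))}) \<notin> M j" by simp
    qed
  qed
qed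

lemma cover:
  assumes TC: "(\<Union>j\<in>K. T j) = E - {e}"
    and Q: "\<forall>j\<in>K. (T j - snd ` set (ps ss j)) \<union> fst ` set (ps ss j) \<subseteq> Q j"
  shows "E - {w} \<subseteq> (\<Union>j\<in>K. Q j)"
proof
  fix v assume v: "v \<in> E - {w}"
  have inX: "fst s \<in> Q (fst (snd s))" if s: "s \<in> set ss" for s
  proof -
    have "fst (snd s) \<in> K" using D7[OF s] by blast
    moreover have "fst s \<in> fst ` set (ps ss (fst (snd s)))" unfolding ps_def using s by force
    ultimately show ?thesis using Q by blast
  qed
  have inK: "fst (snd s) \<in> K" if s: "s \<in> set ss" for s using D7[OF s] by blast
  show "v \<in> (\<Union>j\<in>K. Q j)"
  proof (cases "v = e")
    case True
    have "ss \<noteq> []"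
    proof
      assume "ss = []"
      then have "w = e" using apath_vtx0[OF P] by (simp add: vtx_def)
      then show False using v True by blast
    qed
    then have "ss!0 \<in> set ss" by simp
    moreover have "fst (ss!0) = e" using apath_vtx0[OF P] \<open>ss \<noteq> []\<close> by (simp add: vtx_def)
    ultimately show ?thesis using inX inK True by fastforce
  next
    case False
    then obtain l where l: "l \<in> K" "v \<in> T l" using TC v by blast
    show ?thesis
    proof (cases "v \<in> snd ` set (ps ss l)")
      case False
      then show ?thesis using Q l by blast
    next
      case True
      then obtain s where s: "s \<in> set ss" "v = snd (snd s)" unfolding ps_def by auto
      obtain k where k: "k < length ss" "s = ss!k" using s by (auto simp: in_set_conv_nth)
      have "snd (snd (ss!k)) = vtx ss w (Suc k)" using apath_step[OF P k(1)] by (metis snd_conv)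
      then have vk: "v = vtx ss w (Suc k)" using s k by simp
      have "Suc k \<noteq> length ss" using vk v by auto
      then have sk: "Suc k < length ss" using k by simp
      then have "fst (ss!(Suc k)) = v" using vk by (simp add: vtx_def)
      moreover have "ss!(Suc k) \<in> set ss" using sk by simp
      ultimately show ?thesis using inX inK by fastforce
    qed
  qed
qed

end

lemma min_path:
  assumes "apath K M T e ss0 w"
  shows "\<exists>ss. apath K M T e ss w \<and> (\<forall>ss'. apath K M T e ss' w \<longrightarrow> length ss \<le> length ss')"
proof -
  let ?P = "\<lambda>n. \<exists>ss. apath K M T e ss w \<and> length ss = n"
  have "?P (length ss0)" using assms by blast
  then have "?P (LEAST n. ?P n)" by (rule LeastI)
  then obtain ss where ss: "apath K M T e ss w" "length ss = (LEAST n. ?P n)" by blast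
  have "length ss \<le> length ss'" if "apath K M T e ss' w" for ss'
    unfolding ss(2) using that by (intro Least_le) blast
  then show ?thesis using ss(1) by blast
qed

lemma PSa:
  assumes mat: "\<forall>j\<in>K. matroid E (M j)" and TM: "\<forall>j\<in>K. T j \<in> M j" and eE: "e \<in> E"
    and TC: "(\<Union>j\<in>K. T j) = E - {e}" and P0: "apath K M T e ss0 w"
  shows "\<exists>Q. (\<forall>j\<in>K. Q j \<in> M j) \<and> E - {w} \<subseteq> (\<Union>j\<in>K. Q j)"
proof -
  obtain ss where ss: "apath K M T e ss w" "\<forall>ss'. apath K M T e ss' w \<longrightarrow> length ss \<le> length ss'"
    using min_path[OF P0] by blast
  interpret spath E K M T e ss w using mat TM eE ss by unfold_locales
  define Q where "Q j = (T j - snd ` set (ps ss j)) \<union> fst ` set (ps ss j)" for j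
  have "\<forall>j\<in>K. Q j \<in> M j"
  proof
    fix j assume j: "j \<in> K"
    show "Q j \<in> M j" unfolding Q_def using shift[OF j, of "T j"] by simp
  qed
  moreover have "\<forall>j\<in>K. (T j - snd ` set (ps ss j)) \<union> fst ` set (ps ss j) \<subseteq> Q j"
    unfolding Q_def by simp
  then have "E - {w} \<subseteq> (\<Union>j\<in>K. Q j)" by (rule cover[OF TC])
  ultimately show ?thesis by blast
qed

lemma PSb:
  assumes mat: "\<forall>j\<in>K. matroid E (M j)" and TM: "\<forall>j\<in>K. T j \<in> M j" and eE: "e \<in> E"
    and TC: "(\<Union>j\<in>K. T j) = E - {e}" and P0: "apath K M T e ss0 w"
    and j0: "j0 \<in> K" "w \<notin> T j0" "insert w (T j0) \<in> M j0"
  shows "has_covering K E M"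
proof -
  obtain ss where ss: "apath K M T e ss w" "\<forall>ss'. apath K M T e ss' w \<longrightarrow> length ss \<le> length ss'"
    using min_path[OF P0] by blast
  interpret spath E K M T e ss w using mat TM eE ss by unfold_locales
  define Q where "Q j = ((if j = j0 then insert w (T j) else T j) - snd ` set (ps ss j)) \<union> fst ` set (ps ss j)" for j
  have QM: "\<forall>j\<in>K. Q j \<in> M j"
  proof
    fix j assume j: "j \<in> K"
    show "Q j \<in> M j"
    proof (cases "j = j0")
      case True
      then show ?thesis unfolding Q_def using shift[OF j, of "insert w (T j)"] j0 by simp
    next
      case False
      then show ?thesis unfolding Q_def using shift[OF j, of "T j"] by simp
    qed
  qed
  have "\<forall>j\<in>K. (T j - snd ` set (ps ss j)) \<union> fst ` set (ps ss j) \<subseteq> Q j"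
    unfolding Q_def by auto
  then have "E - {w} \<subseteq> (\<Union>j\<in>K. Q j)" by (rule cover[OF TC])
  moreover have "w \<notin> snd ` set (ps ss j0)"
  proof
    assume "w \<in> snd ` set (ps ss j0)"
    then obtain s where s: "s \<in> set ss" "fst (snd s) = j0" "w = snd (snd s)" unfolding ps_def by auto
    then show False using D7[OF s(1)] j0(2) unfolding arc_def by auto
  qed
  then have "w \<in> Q j0" unfolding Q_def by simp
  ultimately have "E \<subseteq> (\<Union>j\<in>K. Q j)" using j0(1) by blast
  moreover have "(\<Union>j\<in>K. Q j) \<subseteq> E" using QM mat m_sub by blast
  ultimately show ?thesis unfolding has_covering_def covering_def using QM by blast
qed

lemma closedW:
  assumes mat: "\<forall>j\<in>K. matroid E (M j)" and TM: "\<forall>j\<in>K. T j \<in> M j" and eE: "e \<in> E"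
    and TC: "(\<Union>j\<in>K. T j) = E - {e}" and noc: "\<not> has_covering K E M"
  shows "\<forall>w\<in>{w. \<exists>ss. apath K M T e ss w}. \<forall>j\<in>K. w \<in> T j \<or> insert w (T j \<inter> {w. \<exists>ss. apath K M T e ss w}) \<notin> M j"
proof (intro ballI)
  fix w j assume w: "w \<in> {w. \<exists>ss. apath K M T e ss w}" and j: "j \<in> K"
  let ?W = "{w. \<exists>ss. apath K M T e ss w}"
  obtain ss where ss: "apath K M T e ss w" using w by blast
  have TE: "\<forall>j\<in>K. T j \<subseteq> E" using mat TM m_sub by blast
  have wE: "w \<in> E" using apath_E[OF ss eE TE] .
  have m: "matroid E (M j)" using mat j by blast
  have Tj: "T j \<in> M j" using TM j by blast
  show "w \<in> T j \<or> insert w (T j \<inter> ?W) \<notin> M j"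
  proof (cases "w \<in> T j")
    case False
    have dep: "insert w (T j) \<notin> M j" using PSb[OF mat TM eE TC ss j False] noc by blast
    obtain C where C: "circuit E (M j) C" "w \<in> C" "C \<subseteq> insert w (T j)"
      "\<And>y. y \<in> T j \<Longrightarrow> y \<in> C \<longleftrightarrow> insert w (T j - {y}) \<in> M j"
      by (rule fc[OF m Tj wE False dep]) blast
    have "C \<subseteq> insert w (T j \<inter> ?W)"
    proof
      fix y assume y: "y \<in> C"
      show "y \<in> insert w (T j \<inter> ?W)"
      proof (cases "y = w")
        case False
        then have yT: "y \<in> T j" using C(3) y by blast
        then have "insert w (T j - {y}) \<in> M j" using C(4) y by blast
        then have "arc M T j w y" unfolding arc_def using False yT dep \<open>w \<notin> T j\<close> by blast
        then have "apath K M T w [(w, j, y)] y" using j by (auto intro: apath.intros)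
        then have "apath K M T e (ss @ [(w, j, y)]) y" by (rule apath_app[OF ss])
        then show ?thesis using yT by blast
      qed simp
    qed
    then have "insert w (T j \<inter> ?W) \<notin> M j" using circ_dep[OF C(1)] m_down[OF m] by blast
    then show ?thesis by blast
  qed simp
qed

lemma glue_cover:
  assumes mat: "\<forall>j\<in>K. matroid E (M j)" and TM: "\<forall>j\<in>K. T j \<in> M j"
    and TC: "(\<Union>j\<in>K. T j) = E - {e}" and W: "W \<subseteq> E" "e \<in> W"
    and cl: "\<forall>w\<in>W. \<forall>j\<in>K. w \<in> T j \<or> insert w (T j \<inter> W) \<notin> M j"
    and QM: "\<forall>j\<in>K. Q j \<in> M j" and QW: "W \<subseteq> (\<Union>j\<in>K. Q j)"
  shows "has_covering K E M"
proof -
  define U where "U j = (Q j \<inter> W) \<union> (T j - W)" for j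
  have UM: "\<forall>j\<in>K. U j \<in> M j"
  proof
    fix j assume j: "j \<in> K"
    have m: "matroid E (M j)" using mat j by blast
    have "Q j \<inter> W \<in> M j" using m_down[OF m] QM j by blast
    then show "U j \<in> M j" unfolding U_def
      using glue[OF m _ W(1) _ _, of "T j" "Q j \<inter> W"] TM cl j by blast
  qed
  have "(\<Union>j\<in>K. U j) = E"
  proof
    show "(\<Union>j\<in>K. U j) \<subseteq> E" using W(1) TC unfolding U_def by blast
    show "E \<subseteq> (\<Union>j\<in>K. U j)"
    proof
      fix v assume v: "v \<in> E"
      show "v \<in> (\<Union>j\<in>K. U j)"
      proof (cases "v \<in> W")
        case True
        then obtain j where "j \<in> K" "v \<in> Q j" using QW by blast
        then show ?thesis unfolding U_def using True by blast
      next
        case False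
        then have "v \<in> E - {e}" using v W(2) by blast
        then obtain j where "j \<in> K" "v \<in> T j" using TC by blast
        then show ?thesis unfolding U_def using False by blast
      qed
    qed
  qed
  then show ?thesis unfolding has_covering_def covering_def using UM by blast
qed

theorem lemma3p4:
  fixes E :: "'a set" and K :: "'k set" and M :: "'k \<Rightarrow> 'a set set" and e :: 'a
  assumes "\<forall>i\<in>K. matroid E (M i)"
    and "e \<in> E"
    and "has_covering K (E - {e}) (\<lambda>i. restr (E - {e}) (M i))"
  shows "has_covering K E M \<longleftrightarrow>
         \<not> (\<exists>X. X \<subseteq> E - {e} \<and> family_tight K M X \<and> (\<forall>i\<in>K. e \<in> span E (M i) X))"
proof
  assume cov: "has_covering K E M"
  show "\<not> (\<exists>X. X \<subseteq> E - {e} \<and> family_tight K M X \<and> (\<forall>i\<in>K. e \<in> span E (M i) X))"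
  proof
    assume "\<exists>X. X \<subseteq> E - {e} \<and> family_tight K M X \<and> (\<forall>i\<in>K. e \<in> span E (M i) X)"
    then obtain X where X: "X \<subseteq> E - {e}" "family_tight K M X" "\<forall>i\<in>K. e \<in> span E (M i) X" by blast
    from cov obtain R where R: "\<forall>i\<in>K. R i \<in> M i" "(\<Union>i\<in>K. R i) = E"
      unfolding has_covering_def covering_def by blast
    obtain k where k: "k \<in> K" "e \<in> R k" using R(2) assms(2) by blast
    have mk: "matroid E (M k)" using assms(1) k by blast
    have XE: "X \<subseteq> E" using X(1) by blast
    have cov': "covering K X (\<lambda>i. restr X (M i)) (\<lambda>i. R i \<inter> X)"
    proof -
      have "\<forall>i\<in>K. R i \<inter> X \<in> restr X (M i)"
      proof
        fix i assume i: "i \<in> K"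
        have "R i \<inter> X \<in> M i" using m_down[of E "M i" "R i"] assms(1) R(1) i by blast
        then show "R i \<inter> X \<in> restr X (M i)" unfolding restr_def by blast
      qed
      moreover have "(\<Union>i\<in>K. R i \<inter> X) = X" using R(2) XE by blast
      ultimately show ?thesis unfolding covering_def by blast
    qed
    have sp: "spanning X (restr X (M k)) (R k \<inter> X)"
      using X(2) cov' k unfolding family_tight_def tight_def by blast
    have cl: "\<forall>w\<in>X. w \<in> R k \<or> insert w (R k \<inter> X) \<notin> M k"
    proof
      fix w assume w: "w \<in> X"
      then have "spans X (restr X (M k)) (R k \<inter> X) w" using sp unfolding spanning_def by blast
      then have "w \<in> R k \<inter> X \<or> (\<exists>C. circuit X (restr X (M k)) C \<and> w \<in> C \<and> C - {w} \<subseteq> R k \<inter> X)"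
        unfolding spans_def by blast
      then show "w \<in> R k \<or> insert w (R k \<inter> X) \<notin> M k"
      proof
        assume "\<exists>C. circuit X (restr X (M k)) C \<and> w \<in> C \<and> C - {w} \<subseteq> R k \<inter> X"
        then obtain C where C: "circuit X (restr X (M k)) C" "w \<in> C" "C - {w} \<subseteq> R k \<inter> X" by blast
        have "C \<subseteq> X" "C \<notin> restr X (M k)" using C(1) unfolding circuit_def by blast+
        then have "C \<notin> M k" unfolding restr_def by blast
        moreover have "C \<subseteq> insert w (R k \<inter> X)" using C by blast
        ultimately show ?thesis using m_down[OF mk] by blast
      qed blast
    qed
    have "spans E (M k) X e" using X(3) k unfolding span_def by blast
    moreover have "e \<notin> X" using X(1) by blast
    ultimately obtain C where C: "circuit E (M k) C" "e \<in> C" "C - {e} \<subseteq> X" unfolding spans_def by blast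
    have CeM: "C - {e} \<in> M k" using circ_sub[OF C(1)] C(2) by blast
    have Rk: "R k \<in> M k" using R(1) k by blast
    have "(C - {e}) \<union> (R k - X) \<in> M k" using glue[OF mk Rk XE cl C(3) CeM] .
    moreover have "C \<subseteq> (C - {e}) \<union> (R k - X)" using k \<open>e \<notin> X\<close> by blast
    ultimately show False using circ_dep[OF C(1)] m_down[OF mk] by blast
  qed
next
  assume nex: "\<not> (\<exists>X. X \<subseteq> E - {e} \<and> family_tight K M X \<and> (\<forall>i\<in>K. e \<in> span E (M i) X))"
  show "has_covering K E M"
  proof (rule ccontr)
    assume noc: "\<not> has_covering K E M"
    have mat: "\<forall>j\<in>K. matroid E (M j)" using assms(1) .
    obtain T where T: "covering K (E - {e}) (\<lambda>i. restr (E - {e}) (M i)) T"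
      using assms(3) unfolding has_covering_def by blast
    have TM: "\<forall>j\<in>K. T j \<in> M j" using T unfolding covering_def restr_def by blast
    have TC: "(\<Union>j\<in>K. T j) = E - {e}" using T unfolding covering_def by blast
    have TnE: "\<forall>j\<in>K. e \<notin> T j" using TC by blast
    have TE: "\<forall>j\<in>K. T j \<subseteq> E" using TC by blast
    define W where "W = {w. \<exists>ss. apath K M T e ss w}"
    have eW: "e \<in> W" unfolding W_def using apath.anil[of K M T e] by blast
    have WE: "W \<subseteq> E" unfolding W_def using apath_E[OF _ assms(2) TE] by blast
    have cl: "\<forall>w\<in>W. \<forall>j\<in>K. w \<in> T j \<or> insert w (T j \<inter> W) \<notin> M j"
      using closedW[OF mat TM assms(2) TC noc] unfolding W_def .
    define X where "X = W - {e}"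
    have XW: "X \<subseteq> W" unfolding X_def by blast
    have "X \<subseteq> E - {e} \<and> family_tight K M X \<and> (\<forall>i\<in>K. e \<in> span E (M i) X)"
    proof (intro conjI)
      show "X \<subseteq> E - {e}" using WE unfolding X_def by blast
      show "\<forall>i\<in>K. e \<in> span E (M i) X"
      proof
        fix i assume i: "i \<in> K"
        have mi: "matroid E (M i)" using mat i by blast
        have dep: "insert e (T i \<inter> W) \<notin> M i" using cl eW i TnE by blast
        have "T i \<inter> W \<in> M i" using m_down[OF mi] TM i by blast
        moreover have "e \<notin> T i \<inter> W" using TnE i by blast
        ultimately have "spans E (M i) (T i \<inter> W) e" using dep_spans[OF mi _ assms(2) _ dep] by blast
        moreover have "T i \<inter> W \<subseteq> X" using TnE i unfolding X_def by blast
        ultimately have "spans E (M i) X e" unfolding spans_def by blast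
        then show "e \<in> span E (M i) X" unfolding span_def by blast
      qed
      show "family_tight K M X"
        unfolding family_tight_def tight_def
      proof (intro conjI allI impI ballI)
        have "covering K X (\<lambda>i. restr X (M i)) (\<lambda>i. T i \<inter> X)"
        proof -
          have "\<forall>i\<in>K. T i \<inter> X \<in> restr X (M i)"
          proof
            fix i assume i: "i \<in> K"
            have "T i \<inter> X \<in> M i" using m_down[of E "M i" "T i"] mat TM i by blast
            then show "T i \<inter> X \<in> restr X (M i)" unfolding restr_def by blast
          qed
          moreover have "(\<Union>i\<in>K. T i \<inter> X) = X" using TC WE unfolding X_def by blast
          ultimately show ?thesis unfolding covering_def by blast
        qed
        then show "has_covering K X (\<lambda>i. restr X (M i))" unfolding has_covering_def by blast
      next
        fix S i assume Scov: "covering K X (\<lambda>i. restr X (M i)) S" and i: "i \<in> K"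
        have SM: "\<forall>j\<in>K. S j \<in> M j \<and> S j \<subseteq> X" using Scov unfolding covering_def restr_def by blast
        have SU: "(\<Union>j\<in>K. S j) = X" using Scov unfolding covering_def by blast
        have mi: "matroid E (M i)" using mat i by blast
        show "spanning X (restr X (M i)) (S i)"
          unfolding spanning_def
        proof
          fix y assume yX: "y \<in> X"
          show "spans X (restr X (M i)) (S i) y"
          proof (rule ccontr)
            assume ns: "\<not> spans X (restr X (M i)) (S i) y"
            have yS: "y \<notin> S i" using ns unfolding spans_def by blast
            have yE: "y \<in> E" using yX WE XW by blast
            have Si: "S i \<in> M i" "S i \<subseteq> X" using SM i by blast+
            have ins: "insert y (S i) \<in> M i"
            proof (rule ccontr)
              assume dep: "insert y (S i) \<notin> M i"
              obtain C where C: "circuit E (M i) C" "y \<in> C" "C \<subseteq> insert y (S i)"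
                by (rule fc[OF mi Si(1) yE yS dep]) blast
              have CX: "C \<subseteq> X" using C(3) Si(2) yX by blast
              have "circuit X (restr X (M i)) C"
                unfolding circuit_def restr_def
                using CX circ_dep[OF C(1)] circ_sub[OF C(1)] by blast
              then have "spans X (restr X (M i)) (S i) y" unfolding spans_def using C(2,3) by blast
              then show False using ns by blast
            qed
            define U where "U j = S j \<union> (T j - W)" for j
            have UM: "\<forall>j\<in>K. U j \<in> M j"
            proof
              fix j assume j: "j \<in> K"
              have mj: "matroid E (M j)" using mat j by blast
              have "S j \<subseteq> W" "S j \<in> M j" using SM j XW by blast+
              then show "U j \<in> M j" unfolding U_def
                using glue[OF mj _ WE, of "T j" "S j"] TM cl j by blast
            qed
            have Ui: "insert y (S i) \<union> (T i - W) \<in> M i"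
            proof -
              have "insert y (S i) \<subseteq> W" using Si(2) XW yX by blast
              then show ?thesis using glue[OF mi _ WE, of "T i" "insert y (S i)"] TM cl i ins by blast
            qed
            have UC: "(\<Union>j\<in>K. U j) = E - {e}"
            proof -
              have "(\<Union>j\<in>K. U j) = (\<Union>j\<in>K. S j) \<union> (\<Union>j\<in>K. T j - W)" unfolding U_def by blast
              also have "\<dots> = X \<union> ((E - {e}) - W)" using SU TC by blast
              also have "\<dots> = E - {e}" using WE unfolding X_def by blast
              finally show ?thesis .
            qed
            have UE: "\<forall>j\<in>K. U j \<subseteq> E" using UC by blast
            define W' where "W' = {w. \<exists>ss. apath K M U e ss w}"
            have eW': "e \<in> W'" unfolding W'_def using apath.anil[of K M U e] by blast
            have W'E: "W' \<subseteq> E" unfolding W'_def using apath_E[OF _ assms(2) UE] by blast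
            have cl': "\<forall>w\<in>W'. \<forall>j\<in>K. w \<in> U j \<or> insert w (U j \<inter> W') \<notin> M j"
              using closedW[OF mat UM assms(2) UC noc] unfolding W'_def .
            have yW': "y \<notin> W'"
            proof
              assume "y \<in> W'"
              then have "y \<in> U i \<or> insert y (U i \<inter> W') \<notin> M i" using cl' i by blast
              moreover have "y \<notin> U i" using yS yX XW unfolding U_def by blast
              moreover have "insert y (U i \<inter> W') \<subseteq> insert y (S i) \<union> (T i - W)" unfolding U_def by blast
              ultimately show False using Ui m_down[OF mi] by blast
            qed
            have "y \<in> W" using yX XW by blast
            then obtain ss where ss: "apath K M T e ss y" unfolding W_def by blast
            obtain Q where Q: "\<forall>j\<in>K. Q j \<in> M j" "E - {y} \<subseteq> (\<Union>j\<in>K. Q j)"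
              using PSa[OF mat TM assms(2) TC ss] by blast
            have "W' \<subseteq> (\<Union>j\<in>K. Q j)" using Q(2) W'E yW' by blast
            then have "has_covering K E M" using glue_cover[OF mat UM UC W'E eW' cl' Q(1)] by blast
            then show False using noc by blast
          qed
        qed
      qed
    qed
    then show False using nex by blast
  qed
qed

end
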